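(* Let $\alpha\geq 0$, $\beta\geq 0$, and let $g\in H(\mathbb D)$ be such that $g'$ has no zeros in $\mathbb D$ and an analytic branch of $\log(g')$ belongs to the Bloch space $\mathcal B$. Then $T_g: H^{\infty}_\alpha\rightarrow H^{\infty}_\beta$ is bounded if and only if $$\limsup_{t\rightarrow1^-}\sup_{0\leq\theta<2\pi}(1-t^2)^\beta\int_0^t\frac{|g'(re^{i\theta})|}{(1-r^2)^\alpha}\,dr<+\infty\,.$$
   Context: $\mathbb D$ is the open unit disk and $H(\mathbb D)$ the space of analytic functions on $\mathbb D$. For $\alpha\geq0$, $H^{\infty}_\alpha=\{f\in H(\mathbb D): \|f\|_{H^\infty_\alpha}:=\sup_{z\in\mathbb D}(1-|z|^2)^\alpha|f(z)|<\infty\}$. The Bloch space is $\mathcal B=\{f\in H(\mathbb D): |f(0)|+\sup_{z\in\mathbb D}(1-|z|^2)|f'(z)|<\infty\}$. For $g\in H(\mathbb D)$, the Volterra type operator is $(T_gf)(z)=\int_0^z f(\omega)g'(\omega)\,d\omega$ for $f\in H(\mathbb D)$, $z\in\mathbb D$. *)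

theory Defs
  imports "HOL-Complex_Analysis.Complex_Analysis" "HOL-Library.Liminf_Limsup"
begin

definition hinf_norm :: "real \<Rightarrow> (complex \<Rightarrow> complex) \<Rightarrow> real" where
  "hinf_norm \<alpha> f = (SUP z\<in>ball 0 1. (1 - (norm z)^2) powr \<alpha> * norm (f z))"

definition Hinf :: "real \<Rightarrow> (complex \<Rightarrow> complex) set" where
  "Hinf \<alpha> = {f. f holomorphic_on ball 0 1 \<and>
                 bounded ((\<lambda>z. (1 - (norm z)^2) powr \<alpha> * norm (f z)) ` ball 0 1)}"

definition Bloch :: "(complex \<Rightarrow> complex) set" where
  "Bloch = {f. f holomorphic_on ball 0 1 \<and>
               bounded ((\<lambda>z. (1 - (norm z)^2) * norm (deriv f z)) ` ball 0 1)}"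

definition volterra :: "(complex \<Rightarrow> complex) \<Rightarrow> (complex \<Rightarrow> complex) \<Rightarrow> complex \<Rightarrow> complex" where
  "volterra g f z = contour_integral (linepath 0 z) (\<lambda>w. f w * deriv g w)"

definition volterra_bounded :: "(complex \<Rightarrow> complex) \<Rightarrow> real \<Rightarrow> real \<Rightarrow> bool" where
  "volterra_bounded g \<alpha> \<beta> \<longleftrightarrow>
     (\<forall>f\<in>Hinf \<alpha>. volterra g f \<in> Hinf \<beta>) \<and>
     (\<exists>C. \<forall>f\<in>Hinf \<alpha>. hinf_norm \<beta> (volterra g f) \<le> C * hinf_norm \<alpha> f)"

end

theory Submission
  imports Defs
begin


definition Eg :: "complex \<Rightarrow> complex" where
  "Eg w = contour_integral (linepath 0 w) (\<lambda>z. exp (-(z^2)))"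

lemma Eg_eq_prim:
  assumes "\<And>x. (P has_field_derivative exp (-(x^2))) (at x)"
  shows "Eg w = P w - P 0"
proof -
  have "((\<lambda>z. exp (-(z^2))) has_contour_integral (P (pathfinish (linepath 0 w)) - P (pathstart (linepath 0 w)))) (linepath 0 w)"
    by (rule contour_integral_primitive[where S=UNIV, OF _ valid_path_linepath]) (simp_all add: has_field_derivative_at_within assms)
  then show ?thesis unfolding Eg_def by (simp add: contour_integral_unique)
qed

lemma Eg_deriv: "(Eg has_field_derivative exp (-(w^2))) (at w)"
proof -
  have h: "(\<lambda>z::complex. exp (-(z^2))) holomorphic_on UNIV" by (intro holomorphic_intros)
  obtain P :: "complex \<Rightarrow> complex" where P: "\<And>x. x \<in> UNIV \<Longrightarrow> (P has_field_derivative exp (-(x^2))) (at x within UNIV)"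
    using holomorphic_convex_primitive'[OF convex_UNIV open_UNIV h] by blast
  have P': "\<And>x::complex. (P has_field_derivative exp (-(x^2))) (at x)" using P by simp
  have "Eg = (\<lambda>w. P w - P 0)" using Eg_eq_prim[OF P'] by auto
  moreover have "((\<lambda>w. P w - P 0) has_field_derivative exp (-(w^2)) - 0) (at w)"
    by (intro derivative_intros P')
  ultimately show ?thesis by simp
qed

lemma Eg_diff:
  "Eg b - Eg a = contour_integral (linepath a b) (\<lambda>z. exp (-(z^2)))"
proof -
  have "((\<lambda>z. exp (-(z^2))) has_contour_integral (Eg (pathfinish (linepath a b)) - Eg (pathstart (linepath a b)))) (linepath a b)"
    by (rule contour_integral_primitive[where S=UNIV, OF _ valid_path_linepath]) (simp_all add: has_field_derivative_at_within Eg_deriv)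
  then show ?thesis by (simp add: contour_integral_unique)
qed

lemma Eg_holo: "Eg holomorphic_on S"
  using Eg_deriv by (meson field_differentiable_def field_differentiable_at_within holomorphic_on_def)

lemma Eg_holo'[holomorphic_intros]: "f holomorphic_on S \<Longrightarrow> (\<lambda>z. Eg (f z)) holomorphic_on S"
  using holomorphic_on_compose[of f S Eg] Eg_holo by (simp add: o_def)

lemma Eg_0[simp]: "Eg 0 = 0" by (simp add: Eg_def)

lemma Eg_real_deriv: "((\<lambda>u. Eg (of_real u)) has_vector_derivative of_real (exp (-(u^2)))) (at u)"
proof -
  have "((\<lambda>u. Eg (of_real u)) has_vector_derivative exp (-((of_real u)^2))) (at u)"
    by (rule has_vector_derivative_real_field[OF Eg_deriv])
  moreover have "exp (-((of_real u)^2)) = (of_real (exp (-(u^2))) :: complex)"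
    by (simp add: exp_of_real[symmetric])
  ultimately show ?thesis by simp
qed

definition eg :: "real \<Rightarrow> real" where "eg u = Re (Eg (of_real u))"

lemma eg_deriv: "(eg has_real_derivative exp (-(u^2))) (at u)"
  using has_field_derivative_Re[OF Eg_real_deriv[of u]] unfolding eg_def by simp

lemma Im_Eg_real: "Im (Eg (of_real u)) = 0"
proof -
  have "\<forall>x. ((\<lambda>u. Im (Eg (of_real u))) has_real_derivative 0) (at x)"
    using has_field_derivative_Im[OF Eg_real_deriv] by simp
  from DERIV_isconst_all[OF this, of u 0] show ?thesis by simp
qed

lemma Eg_real: "Eg (of_real u) = of_real (eg u)"
  using Im_Eg_real[of u] unfolding eg_def by (simp add: complex_eq_iff)

lemma eg_0[simp]: "eg 0 = 0" by (simp add: eg_def)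

lemma eg_odd: "eg (-u) = - eg u"
proof -
  have "\<forall>x. ((\<lambda>u. eg u + eg (-u)) has_real_derivative 0) (at x)"
  proof
    fix x
    have "((\<lambda>u. eg u + eg (-u)) has_real_derivative (exp (-(x^2)) + exp (-((-x)^2)) * (-1))) (at x)"
      by (rule DERIV_add[OF eg_deriv]) (rule DERIV_chain2[OF eg_deriv], auto intro!: derivative_eq_intros)
    then show "((\<lambda>u. eg u + eg (-u)) has_real_derivative 0) (at x)" by simp
  qed
  from DERIV_isconst_all[OF this, of u 0] show ?thesis by simp
qed

lemma eg_mono: "a \<le> b \<Longrightarrow> eg a \<le> eg b"
  by (rule DERIV_nonneg_imp_nondecreasing[where f=eg]) (use eg_deriv less_imp_le[OF exp_gt_zero] in blast)+

lemma eg_strict: "a < b \<Longrightarrow> eg a < eg b"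
  by (rule DERIV_pos_imp_increasing[where f=eg]) (use eg_deriv exp_gt_zero in blast)+

lemma eg_tail0:
  assumes "1 \<le> u" "u \<le> v" shows "eg v - eg u \<le> exp (-u)"
proof -
  have "eg v + exp (-v) \<le> eg u + exp (-u)"
  proof (rule DERIV_nonpos_imp_nonincreasing[OF assms(2)])
    fix x assume x: "u \<le> x" "x \<le> v"
    have "((\<lambda>x. eg x + exp (-x)) has_real_derivative exp (-(x^2)) + exp (-x) * (-1)) (at x)"
      by (rule DERIV_add[OF eg_deriv]) (auto intro!: derivative_eq_intros)
    moreover have "exp (-(x^2)) \<le> exp (-x)"
      using x assms by (simp add: power2_eq_square)
    ultimately show "\<exists>y. ((\<lambda>x. eg x + exp (-x)) has_real_derivative y) (at x) \<and> y \<le> 0" by force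
  qed
  then show ?thesis using exp_gt_zero[of "-v"] by linarith
qed

lemma eg_le: "eg v \<le> eg u + exp (-u)" if "1 \<le> u" for u v
proof (cases "v \<le> u")
  case True then show ?thesis using eg_mono[OF True] exp_gt_zero[of "-u"] by linarith
next
  case False then show ?thesis using eg_tail0[OF that, of v] by simp
qed

definition LG :: real where "LG = Sup (range eg)"

lemma bdd_eg: "bdd_above (range eg)"
  by (rule bdd_aboveI[of _ "eg 1 + exp (-1)"]) (use eg_le[of 1] in auto)

lemma eg_le_LG: "eg v \<le> LG"
  unfolding LG_def by (rule cSup_upper[OF _ bdd_eg]) simp

lemma LG_tail: assumes "1 \<le> u" shows "LG - eg u \<le> exp (-u)"
proof -
  have "LG \<le> eg u + exp (-u)" unfolding LG_def
    by (rule cSup_least) (auto intro: eg_le[OF assms])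
  then show ?thesis by simp
qed

lemma LG_pos: "0 < LG"
  using eg_strict[of 0 1] eg_le_LG[of 1] by simp

definition AG :: real where "AG = (LG + 1) * exp 1 / (2 * LG)"

lemma LG_tail2: assumes "0 \<le> u" shows "LG - eg u \<le> (LG + 1) * exp 1 * exp (-u)"
proof (cases "1 \<le> u")
  case True
  have "1 \<le> (LG + 1) * exp 1" using LG_pos
  proof -
    have "1 \<le> exp (1::real)" by simp
    moreover have "1 \<le> LG + 1" using LG_pos by simp
    ultimately show ?thesis using mult_mono[of 1 "LG+1" 1 "exp 1"] by simp
  qed
  then have "exp (-u) \<le> (LG + 1) * exp 1 * exp (-u)" by simp
  then show ?thesis using LG_tail[OF True] by linarith
next
  case False
  have "1 \<le> exp 1 * exp (-u)" using False by (simp add: exp_minus_inverse flip: exp_add)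
  then have "LG \<le> (LG + 1) * (exp 1 * exp (-u))" using LG_pos
    using mult_mono[of LG "LG+1" 1 "exp 1 * exp (-u)"] by simp
  moreover have "0 \<le> eg u" using eg_mono[OF assms] by simp
  ultimately show ?thesis by (simp add: mult.assoc)
qed



definition Psi :: "real \<Rightarrow> complex \<Rightarrow> complex" where
  "Psi \<epsilon> w = 1/2 + Eg (w / of_real \<epsilon>) / of_real (2*LG)"

lemma Psi_holo[holomorphic_intros]: "f holomorphic_on S \<Longrightarrow> (\<lambda>z. Psi \<epsilon> (f z)) holomorphic_on S"
  unfolding Psi_def by (intro holomorphic_intros) (use LG_pos in auto)

lemma Re_Psi_real: "Re (Psi \<epsilon> (of_real x)) = 1/2 + eg (x/\<epsilon>) / (2*LG)"
proof -
  have "Eg (of_real x / of_real \<epsilon>) = of_real (eg (x/\<epsilon>))" using Eg_real[of "x/\<epsilon>"] by simp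
  then show ?thesis unfolding Psi_def by (simp add: Re_divide_of_real)
qed

lemma Psi_step:
  assumes "\<epsilon> > 0"
  shows "\<bar>Re (Psi \<epsilon> (of_real x)) - (if 0 \<le> x then 1 else 0)\<bar> \<le> AG * exp (-\<bar>x\<bar>/\<epsilon>)"
proof (cases "0 \<le> x")
  case True
  have x: "0 \<le> x/\<epsilon>" using True assms by simp
  have "\<bar>Re (Psi \<epsilon> (of_real x)) - 1\<bar> = (LG - eg (x/\<epsilon>)) / (2*LG)"
    using eg_le_LG[of "x/\<epsilon>"] LG_pos by (simp add: Re_Psi_real field_simps)
  also have "\<dots> \<le> (LG + 1) * exp 1 * exp (-(x/\<epsilon>)) / (2*LG)"
    using LG_tail2[OF x] LG_pos by (simp add: divide_right_mono)
  also have "\<dots> = AG * exp (-\<bar>x\<bar>/\<epsilon>)" using True by (simp add: AG_def)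
  finally show ?thesis using True by simp
next
  case False
  have x: "0 \<le> -x/\<epsilon>" using False assms by (simp add: divide_nonpos_pos)
  have e: "eg (x/\<epsilon>) = - eg (-x/\<epsilon>)" using eg_odd[of "-x/\<epsilon>"] by simp
  have "\<bar>Re (Psi \<epsilon> (of_real x))\<bar> = (LG - eg (-x/\<epsilon>)) / (2*LG)"
    using eg_le_LG[of "-x/\<epsilon>"] LG_pos by (simp add: Re_Psi_real e field_simps)
  also have "\<dots> \<le> (LG + 1) * exp 1 * exp (-(-x/\<epsilon>)) / (2*LG)"
    using LG_tail2[OF x] LG_pos by (simp add: divide_right_mono)
  also have "\<dots> = AG * exp (-\<bar>x\<bar>/\<epsilon>)" using False by (simp add: AG_def)
  finally show ?thesis using False by simp
qed

lemma Im_Eg_bound: "\<bar>Im (Eg w)\<bar> \<le> \<bar>Im w\<bar> * (exp (Im w ^ 2) * exp (- (Re w ^ 2)))"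
proof -
  define u where "u = (of_real (Re w) :: complex)"
  have hc: "((\<lambda>z. exp (-(z^2))) has_contour_integral (Eg (pathfinish (linepath u w)) - Eg (pathstart (linepath u w)))) (linepath u w)"
    by (rule contour_integral_primitive[where S=UNIV, OF _ valid_path_linepath]) (simp_all add: has_field_derivative_at_within Eg_deriv)
  have bnd: "norm (exp (-(z^2))) \<le> exp (Im w ^ 2) * exp (- (Re w ^ 2))" if "z \<in> closed_segment u w" for z
  proof -
    have "\<exists>a. 0 \<le> a \<and> a \<le> 1 \<and> z = (1 - a) *\<^sub>R u + a *\<^sub>R w"
      using that by (simp only: in_segment(1))
    then obtain a where a: "0 \<le> a" "a \<le> 1" "z = (1 - a) *\<^sub>R u + a *\<^sub>R w"
      by auto
    have rz: "Re z = Re w" unfolding a(3) u_def by (simp add: algebra_simps)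
    have iz: "Im z = a * Im w" unfolding a(3) u_def by (simp add: algebra_simps)
    have "a^2 \<le> 1" using a by (simp add: power_le_one)
    then have "a^2 * Im w ^ 2 \<le> 1 * Im w ^ 2" by (intro mult_right_mono) auto
    then have "Im z ^ 2 \<le> Im w ^ 2" unfolding iz by (simp add: power_mult_distrib)
    then have "norm (exp (-(z^2))) \<le> exp (Im w ^ 2 - Re w ^ 2)"
      by (simp add: Re_power2 rz)
    then show ?thesis by (simp add: exp_diff exp_minus field_simps)
  qed
  have "norm (Eg w - Eg u) \<le> (exp (Im w ^ 2) * exp (- (Re w ^ 2))) * norm (w - u)"
    using has_contour_integral_bound_linepath[OF hc _ bnd] by simp
  moreover have "norm (w - u) = \<bar>Im w\<bar>" by (simp add: u_def norm_complex_def complex_eq_iff)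
  moreover have "Im (Eg u) = 0" unfolding u_def by (rule Im_Eg_real)
  moreover have "\<bar>Im (Eg w - Eg u)\<bar> \<le> norm (Eg w - Eg u)" by (rule abs_Im_le_cmod)
  ultimately show ?thesis by (simp add: mult.commute)
qed

lemma exp_sq_le: "exp (-(x^2)) \<le> exp (1/4) * exp (-\<bar>x::real\<bar>)"
proof -
  have "-(x^2) \<le> 1/4 + -\<bar>x\<bar>"
  proof -
    have "0 \<le> (\<bar>x\<bar> - 1/2)^2" by simp
    moreover have "(\<bar>x\<bar> - 1/2)^2 = x^2 - \<bar>x\<bar> + 1/4"
      by (simp add: power2_eq_square algebra_simps abs_mult_self_eq)
    ultimately show ?thesis by linarith
  qed
  then have "exp (-(x^2)) \<le> exp (1/4 + -\<bar>x\<bar>)" by (simp only: exp_le_cancel_iff)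
  then show ?thesis by (simp only: exp_add)
qed

lemma Im_Psi_bound:
  assumes "\<epsilon> > 0" "0 \<le> Y" "\<bar>Im w\<bar> \<le> \<epsilon> * Y"
  shows "\<bar>Im (Psi \<epsilon> w)\<bar> \<le> Y * exp (Y^2) * exp (1/4) / (2*LG) * exp (-\<bar>Re w\<bar>/\<epsilon>)"
proof -
  define v where "v = w / of_real \<epsilon>"
  have rv: "Re v = Re w / \<epsilon>" and iv: "Im v = Im w / \<epsilon>" by (auto simp: v_def Re_divide_of_real Im_divide_of_real)
  have iY: "\<bar>Im v\<bar> \<le> Y" using assms by (simp add: iv abs_divide divide_le_eq mult.commute)
  have "\<bar>Im v\<bar> ^ 2 \<le> Y^2" by (rule power_mono[OF iY]) simp
  then have "Im v ^ 2 \<le> Y^2" by simp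
  have "\<bar>Im (Eg v)\<bar> \<le> \<bar>Im v\<bar> * (exp (Im v ^ 2) * exp (- (Re v ^ 2)))" by (rule Im_Eg_bound)
  also have "\<dots> \<le> Y * (exp (Y^2) * (exp (1/4) * exp (-\<bar>Re v\<bar>)))"
    apply (intro mult_mono iY)
    using \<open>Im v ^ 2 \<le> Y^2\<close> exp_sq_le[of "Re v"] assms by auto
  finally have *: "\<bar>Im (Eg v)\<bar> \<le> Y * exp (Y^2) * exp (1/4) * exp (-\<bar>Re w\<bar>/\<epsilon>)"
    using assms by (simp add: rv abs_divide mult_ac)
  have "Im (Psi \<epsilon> w) = Im (Eg v) / (2*LG)" by (simp add: Psi_def v_def Im_divide_of_real)
  then have "\<bar>Im (Psi \<epsilon> w)\<bar> = \<bar>Im (Eg v)\<bar> / (2*LG)" using LG_pos by (simp add: abs_divide)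
  also have "\<dots> \<le> Y * exp (Y^2) * exp (1/4) * exp (-\<bar>Re w\<bar>/\<epsilon>) / (2*LG)"
    using * LG_pos by (simp add: divide_right_mono)
  finally show ?thesis by simp
qed

definition sg :: "real \<Rightarrow> real" where "sg v = (if v \<le> 0 then exp v / 2 else 1 - exp (-v) / 2)"

definition c1 :: real where "c1 = (1 - exp (-1/2)) / 2"

lemma c1_pos: "0 < c1" by (simp add: c1_def)

lemma sg_bounds0: "0 \<le> sg v \<and> sg v \<le> 1"
proof (cases "v \<le> 0")
  case True
  have "exp v \<le> 1" using True by simp
  moreover have "sg v = exp v / 2" using True by (simp add: sg_def)
  ultimately show ?thesis using exp_gt_zero[of v] by linarith
next
  case False
  have "exp (-v) \<le> 1" using False by simp
  moreover have "sg v = 1 - exp (-v) / 2" using False by (simp add: sg_def)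
  ultimately show ?thesis using exp_gt_zero[of "-v"] by linarith
qed

lemma sg_bounds: "0 \<le> sg v" "sg v \<le> 1" using sg_bounds0 by auto

lemma sg_step: "c1 * exp (-\<bar>v\<bar>) \<le> sg (v+1) - sg v"
proof -
  have e12: "exp (-1) \<le> exp (-1/2::real)" by simp
  consider "0 \<le> v" | "v \<le> -1" | "-1 < v" "v < 0" by linarith
  then show ?thesis
  proof cases
    case 1
    have em: "exp (-(v+1)) = exp (-v) * exp (-1)" by (simp add: exp_add[symmetric])
    have "sg (v+1) - sg v = exp (-v) * (1 - exp (-1)) / 2"
    proof (cases "v = 0")
      case True then show ?thesis by (simp add: sg_def)
    next
      case False
      then have "sg (v+1) = 1 - exp (-(v+1)) / 2" "sg v = 1 - exp (-v) / 2" using 1 by (auto simp: sg_def)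
      then show ?thesis using em by (simp add: algebra_simps)
    qed
    moreover have "c1 * exp (-v) \<le> exp (-v) * (1 - exp (-1)) / 2"
      using e12 by (simp add: c1_def field_simps)
    moreover have e: "exp (-\<bar>v\<bar>) = exp (-v)" using 1 by simp
    ultimately show ?thesis unfolding e by linarith
  next
    case 2
    then have "sg (v+1) - sg v = exp v * (exp 1 - 1) / 2"
      by (auto simp: sg_def exp_add field_simps)
    moreover have "c1 * exp v \<le> exp v * (exp 1 - 1) / 2"
    proof -
      have "1 - exp (-1/2) \<le> exp 1 - (1::real)"
        using exp_ge_add_one_self[of 1] exp_gt_zero[of "-1/2"] by linarith
      then have "c1 \<le> (exp 1 - 1) / 2" by (simp add: c1_def)
      from mult_right_mono[OF this, of "exp v"] show ?thesis by (simp add: mult.commute)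
    qed
    moreover have e: "exp (-\<bar>v\<bar>) = exp v" using 2 by simp
    ultimately show ?thesis unfolding e by linarith
  next
    case 3
    have d: "sg (v+1) - sg v = 1 - (exp (-v-1) + exp v) / 2"
      using 3 by (simp add: sg_def field_simps)
    have "exp (-v-1) + exp v \<le> 1 + exp (-1/2)"
    proof (cases "v \<le> -1/2")
      case True
      then have "exp v \<le> exp (-1/2)" by simp
      moreover have "exp (-v-1) \<le> 1" using 3 by simp
      ultimately show ?thesis by linarith
    next
      case False
      then have "exp (-v-1) \<le> exp (-1/2)" by simp
      moreover have "exp v \<le> 1" using 3 by simp
      ultimately show ?thesis by linarith
    qed
    then have "c1 \<le> sg (v+1) - sg v"
    proof -
      assume h: "exp (-v-1) + exp v \<le> 1 + exp (-1/2)"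
      define a where "a = exp (-v-1) + exp v"
      define b where "b = exp (-1/2::real)"
      have "a \<le> 1 + b" using h unfolding a_def b_def .
      moreover have "sg (v+1) - sg v = 1 - a/2" using d unfolding a_def .
      moreover have "c1 = (1 - b)/2" unfolding c1_def b_def ..
      ultimately show ?thesis by argo
    qed
    moreover have "c1 * exp (-\<bar>v\<bar>) \<le> c1" using c1_pos by (simp add: mult_le_cancel_left1)
    ultimately show ?thesis by linarith
  qed
qed

lemma sum_exp_bound: "(\<Sum>n<N. exp (-\<bar>u - real n\<bar>)) \<le> 1 / c1"
proof -
  have "(\<Sum>n<N. exp (-\<bar>u - real n\<bar>)) \<le> (\<Sum>n<N. (sg (real (Suc n) - u) - sg (real n - u)) / c1)"
  proof (rule sum_mono)
    fix n assume "n \<in> {..<N}"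
    have "c1 * exp (-\<bar>real n - u\<bar>) \<le> sg (real n - u + 1) - sg (real n - u)" by (rule sg_step)
    then show "exp (-\<bar>u - real n\<bar>) \<le> (sg (real (Suc n) - u) - sg (real n - u)) / c1"
      using c1_pos by (simp add: field_simps abs_minus_commute)
  qed
  also have "\<dots> = (\<Sum>n<N. sg (real (Suc n) - u) - sg (real n - u)) / c1"
    by (simp only: sum_divide_distrib)
  also have "\<dots> = (sg (real N - u) - sg (real 0 - u)) / c1"
    by (simp only: sum_lessThan_telescope[where f="\<lambda>n. sg (real n - u)"])
  also have "\<dots> \<le> 1 / c1"
    using sg_bounds[of "real N - u"] sg_bounds[of "real 0 - u"] c1_pos by (simp add: divide_right_mono)
  finally show ?thesis .
qed



lemma cint_prim:
  assumes p: "p holomorphic_on ball 0 1" and z: "z \<in> ball (0::complex) 1"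
  shows "((\<lambda>z. contour_integral (linepath 0 z) p) has_field_derivative p z) (at z)"
proof -
  obtain P where P: "\<And>x. x \<in> ball 0 1 \<Longrightarrow> (P has_field_derivative p x) (at x within ball 0 1)"
    using holomorphic_convex_primitive'[OF convex_ball open_ball p] by blast
  have eq: "P w - P 0 = contour_integral (linepath 0 w) p" if w: "w \<in> ball 0 1" for w
  proof -
    have "closed_segment 0 w \<subseteq> ball 0 1"
      by (rule closed_segment_subset) (use w in auto)
    then have "(p has_contour_integral (P (pathfinish (linepath 0 w)) - P (pathstart (linepath 0 w)))) (linepath 0 w)"
      by (intro contour_integral_primitive[OF P valid_path_linepath]) auto
    then show ?thesis by (simp add: contour_integral_unique)
  qed
  have "(P has_field_derivative p z) (at z)" using P[OF z] by (simp add: at_within_open[OF z open_ball])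
  then have "((\<lambda>w. P w - P 0) has_field_derivative p z - 0) (at z)" by (intro derivative_intros)
  then have "((\<lambda>w. P w - P 0) has_field_derivative p z) (at z)" by simp
  then show ?thesis
    by (rule has_field_derivative_transform_within_open[OF _ open_ball z]) (rule eq)
qed

lemma volterra_eq: "volterra g f = (\<lambda>z. contour_integral (linepath 0 z) (\<lambda>w. f w * deriv g w))"
  by (rule ext) (simp add: volterra_def)

lemma volterra_deriv:
  assumes "f holomorphic_on ball 0 1" "g holomorphic_on ball 0 1" "z \<in> ball 0 1"
  shows "(volterra g f has_field_derivative f z * deriv g z) (at z)"
  unfolding volterra_eq
  by (rule cint_prim[of "\<lambda>w. f w * deriv g w", OF _ assms(3)]) (use assms in \<open>auto intro!: holomorphic_intros\<close>)

lemma volterra_holo: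
  assumes "f holomorphic_on ball 0 1" "g holomorphic_on ball 0 1"
  shows "volterra g f holomorphic_on ball 0 1"
  using volterra_deriv[OF assms] by (meson field_differentiable_def field_differentiable_at_within holomorphic_on_def)

lemma volterra_0: "volterra g f 0 = 0" by (simp add: volterra_def)

lemma cint_ray:
  "contour_integral (linepath 0 (of_real t * \<zeta>)) p = integral {0..1} (\<lambda>\<tau>. p (of_real (\<tau> * t) * \<zeta>) * (of_real t * \<zeta>))"
  unfolding contour_integral_integral by (simp add: linepath_def scaleR_conv_of_real mult.assoc)

lemma integral_stretch01:
  fixes k :: "real \<Rightarrow> real" assumes t: "0 < t"
  shows "integral {0..t} k = t * integral {0..1} (\<lambda>\<tau>. k (t * \<tau>))"
proof -
  have img: "(\<lambda>x. x / t) ` {0..t} = {0..1}"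
  proof
    show "(\<lambda>x. x/t) ` {0..t} \<subseteq> {0..1}" using t by (auto simp: divide_simps)
    show "{0..1} \<subseteq> (\<lambda>x. x/t) ` {0..t}"
    proof
      fix y assume y: "y \<in> {0..(1::real)}"
      then have "t*y \<in> {0..t}" using t by (auto simp: mult_le_cancel_left1)
      moreover have "y = (t*y)/t" using t by simp
      ultimately show "y \<in> (\<lambda>x. x/t) ` {0..t}" by (rule rev_image_eqI)
    qed
  qed
  have "integral ((\<lambda>x. x / t) ` {0..t}) (\<lambda>x. k (t * x)) = (1 / \<bar>t\<bar>) *\<^sub>R integral {0..t} k"
    by (rule integral_stretch_real) (use t in simp)
  then show ?thesis using t img by (simp add: field_simps)
qed

lemma ray_in_ball:
  fixes \<zeta> :: complex
  assumes "norm \<zeta> = 1" "0 \<le> r" "r < 1"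
  shows "of_real r * \<zeta> \<in> ball (0::complex) 1"
  using assms by (simp add: norm_mult)

lemma cont_ray:
  fixes \<zeta> :: complex and q :: "complex \<Rightarrow> 'b::topological_space"
  assumes q: "continuous_on (ball 0 1) q" and z: "norm \<zeta> = 1" and t: "t < 1"
  shows "continuous_on {0..t} (\<lambda>r. q (of_real r * \<zeta>))"
proof (rule continuous_on_compose2[OF q])
  show "continuous_on {0..t} (\<lambda>r. of_real r * \<zeta>)" by (intro continuous_intros)
  show "(\<lambda>r. of_real r * \<zeta>) ` {0..t} \<subseteq> ball 0 1" using ray_in_ball[OF z] t by auto
qed

lemma cont_I_integrand:
  fixes \<zeta> :: complex
  assumes g: "g holomorphic_on ball 0 1" and z: "norm \<zeta> = 1" and t: "t < 1"
  shows "continuous_on {0..t} (\<lambda>r. norm (deriv g (of_real r * \<zeta>)) / (1 - r^2) powr \<alpha>)"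
proof -
  have dg: "continuous_on (ball 0 1) (deriv g)"
    by (intro holomorphic_on_imp_continuous_on holomorphic_intros g) simp
  have pos: "0 < 1 - r^2" if "r \<in> {0..t}" for r
  proof -
    have "r^2 < 1" using that t by (simp add: power_less_one_iff abs_square_less_1)
    then show ?thesis by simp
  qed
  show ?thesis
    by (intro continuous_intros cont_ray[OF dg z t]) (use pos in force)+
qed

lemma integrand_nonneg: "0 \<le> norm (deriv g (of_real r * \<zeta>)) / (1 - r^2) powr \<alpha>"
  by simp

lemma hinf_le:
  assumes "f \<in> Hinf \<alpha>" "w \<in> ball 0 1"
  shows "(1 - norm w ^2) powr \<alpha> * norm (f w) \<le> hinf_norm \<alpha> f"
  unfolding hinf_norm_def using assms by (auto simp: Hinf_def intro!: cSUP_upper bounded_imp_bdd_above)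

lemma hinf_nonneg: "f \<in> Hinf \<alpha> \<Longrightarrow> 0 \<le> hinf_norm \<alpha> f"
  using hinf_le[of f \<alpha> 0] by (smt (verit) centre_in_ball mult_nonneg_nonneg norm_ge_zero powr_ge_zero zero_less_one)

lemma polar_form:
  obtains \<theta> where "\<theta> \<in> {0..<2*pi}" "z = of_real (norm z) * cis \<theta>"
proof -
  have z: "z = of_real (norm z) * cis (Arg z)" using rcis_cmod_Arg[of z] by (simp add: rcis_def)
  show ?thesis
  proof (cases "0 \<le> Arg z")
    case True
    then show ?thesis using that[of "Arg z"] z Arg_bounded[of z] by auto
  next
    case False
    have "cis (Arg z + 2*pi) = cis (Arg z)" by (simp add: cis_mult[symmetric])
    then show ?thesis using that[of "Arg z + 2*pi"] z Arg_bounded[of z] False by auto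
  qed
qed



definition Iint :: "(complex \<Rightarrow> complex) \<Rightarrow> real \<Rightarrow> real \<Rightarrow> real \<Rightarrow> real" where
  "Iint g \<alpha> \<theta> t = integral {0..t} (\<lambda>r. norm (deriv g (of_real r * cis \<theta>)) / (1 - r^2) powr \<alpha>)"

lemma cont_scale:
  fixes F :: "real \<Rightarrow> 'b::topological_space"
  assumes "continuous_on {0..t} F" "0 \<le> t"
  shows "continuous_on {0..1} (\<lambda>\<tau>. F (t * \<tau>))"
proof (rule continuous_on_compose2[OF assms(1)])
  show "continuous_on {0..1} (\<lambda>\<tau>. t * \<tau>)" by (intro continuous_intros)
  show "(\<lambda>\<tau>. t * \<tau>) ` {0..1} \<subseteq> {0..t}" using assms(2) by (auto simp: mult_left_le)
qed

lemma Iint_nonneg: "0 \<le> t \<Longrightarrow> t < 1 \<Longrightarrow> g holomorphic_on ball 0 1 \<Longrightarrow> 0 \<le> Iint g \<alpha> \<theta> t"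
  unfolding Iint_def
  by (rule integral_nonneg[OF integrable_continuous_interval[OF cont_I_integrand]]) auto

lemma Iint_stretch:
  assumes "0 < t" "t < 1" "g holomorphic_on ball 0 1"
  shows "Iint g \<alpha> \<theta> t = t * integral {0..1} (\<lambda>\<tau>. norm (deriv g (of_real (t*\<tau>) * cis \<theta>)) / (1 - (t*\<tau>)^2) powr \<alpha>)"
  unfolding Iint_def by (rule integral_stretch01) (use assms in auto)

lemma suff_bound:
  assumes g: "g holomorphic_on ball 0 1" and f: "f \<in> Hinf \<alpha>" and z: "z \<in> ball 0 1"
    and zt: "z = of_real (norm z) * cis \<theta>"
  shows "norm (volterra g f z) \<le> hinf_norm \<alpha> f * Iint g \<alpha> \<theta> (norm z)"
proof (cases "z = 0")
  case True
  then show ?thesis by (simp add: volterra_0 Iint_def)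
next
  case False
  define t where "t = norm z"
  define \<zeta> where "\<zeta> = cis \<theta>"
  define Nf where "Nf = hinf_norm \<alpha> f"
  have t: "0 < t" "t < 1" using False z by (auto simp: t_def)
  have nz: "norm \<zeta> = 1" by (simp add: \<zeta>_def)
  have fh: "f holomorphic_on ball 0 1" using f by (simp add: Hinf_def)
  have fc: "continuous_on (ball 0 1) f" by (rule holomorphic_on_imp_continuous_on[OF fh])
  have dg: "continuous_on (ball 0 1) (deriv g)"
    by (intro holomorphic_on_imp_continuous_on holomorphic_intros g) simp
  have "volterra g f z = volterra g f (of_real t * \<zeta>)"
    unfolding t_def \<zeta>_def by (rule arg_cong[where f="volterra g f", OF zt])
  also have "\<dots> = integral {0..1} (\<lambda>\<tau>. f (of_real (\<tau> * t) * \<zeta>) * deriv g (of_real (\<tau> * t) * \<zeta>) * (of_real t * \<zeta>))"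
    by (simp only: volterra_def cint_ray)
  also have "\<dots> = integral {0..1} (\<lambda>\<tau>. f (of_real (t * \<tau>) * \<zeta>) * deriv g (of_real (t * \<tau>) * \<zeta>) * (of_real t * \<zeta>))"
    by (simp add: mult.commute)
  finally have eqv: "volterra g f z = \<dots>" .
  define k where "k = (\<lambda>r. norm (deriv g (of_real r * \<zeta>)) / (1 - r^2) powr \<alpha>)"
  have kc: "continuous_on {0..t} k" unfolding k_def by (rule cont_I_integrand[OF g nz t(2)])
  have c1: "continuous_on {0..t} (\<lambda>r. f (of_real r * \<zeta>) * deriv g (of_real r * \<zeta>) * (of_real t * \<zeta>))"
    by (intro continuous_intros cont_ray[OF fc nz t(2)] cont_ray[OF dg nz t(2)])
  have int1: "(\<lambda>\<tau>. f (of_real (t * \<tau>) * \<zeta>) * deriv g (of_real (t * \<tau>) * \<zeta>) * (of_real t * \<zeta>)) integrable_on {0..1}"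
    by (rule integrable_continuous_interval[OF cont_scale[OF c1]]) (use t in simp)
  have int2: "(\<lambda>\<tau>. k (t * \<tau>) * (t * Nf)) integrable_on {0..1}"
    by (rule integrable_continuous_interval) (intro continuous_intros cont_scale[OF kc], use t in simp)
  have bnd: "norm (f (of_real (t * \<tau>) * \<zeta>) * deriv g (of_real (t * \<tau>) * \<zeta>) * (of_real t * \<zeta>)) \<le> k (t * \<tau>) * (t * Nf)"
    if tau: "\<tau> \<in> {0..1}" for \<tau>
  proof -
    define r where "r = t * \<tau>"
    have r: "0 \<le> r" "r < 1" proof -
      show "0 \<le> r" using tau t by (simp add: r_def)
      have "r \<le> t" using tau t by (simp add: r_def mult_left_le)
      then show "r < 1" using t by simp
    qed
    have w: "of_real r * \<zeta> \<in> ball 0 1" by (rule ray_in_ball[OF nz r])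
    have nw: "norm (of_real r * \<zeta>) = r" using r nz by (simp add: norm_mult)
    have pos: "0 < (1 - r^2) powr \<alpha>"
    proof -
      have "r^2 < 1" using r by (simp add: power_less_one_iff abs_square_less_1)
      then show ?thesis by simp
    qed
    have "(1 - r^2) powr \<alpha> * norm (f (of_real r * \<zeta>)) \<le> Nf"
      using hinf_le[OF f w] nw by (simp add: Nf_def)
    then have ff: "norm (f (of_real r * \<zeta>)) \<le> Nf / (1 - r^2) powr \<alpha>"
      using pos by (simp add: field_simps)
    have "norm (f (of_real r * \<zeta>) * deriv g (of_real r * \<zeta>) * (of_real t * \<zeta>))
        = norm (f (of_real r * \<zeta>)) * norm (deriv g (of_real r * \<zeta>)) * t"
      using t nz by (simp add: norm_mult)
    also have "\<dots> \<le> (Nf / (1 - r^2) powr \<alpha>) * norm (deriv g (of_real r * \<zeta>)) * t"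
      using ff t by (intro mult_right_mono) auto
    also have "\<dots> = k r * (t * Nf)" by (simp add: k_def)
    finally show ?thesis by (simp add: r_def)
  qed
  have "norm (volterra g f z) \<le> integral {0..1} (\<lambda>\<tau>. k (t * \<tau>) * (t * Nf))"
    unfolding eqv by (rule integral_norm_bound_integral[OF int1 int2 bnd])
  also have "\<dots> = integral {0..1} (\<lambda>\<tau>. k (t * \<tau>)) * (t * Nf)" by simp
  also have "\<dots> = Nf * Iint g \<alpha> \<theta> t"
    using Iint_stretch[OF t g, of \<alpha> \<theta>] by (simp add: k_def \<zeta>_def)
  finally show ?thesis by (simp add: Nf_def t_def)
qed



lemma sufficiency:
  assumes g: "g holomorphic_on ball 0 1" and a: "0 \<le> \<alpha>" and b: "0 \<le> \<beta>"
    and lim: "Limsup (at_left 1) (\<lambda>t::real. SUP \<theta>\<in>{0..<2*pi}. ereal ((1 - t^2) powr \<beta> * Iint g \<alpha> \<theta> t)) < \<infinity>"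
  shows "volterra_bounded g \<alpha> \<beta>"
proof -
  define F where "F = (\<lambda>t::real. SUP \<theta>\<in>{0..<2*pi}. ereal ((1 - t^2) powr \<beta> * Iint g \<alpha> \<theta> t))"
  obtain n :: nat where L: "Limsup (at_left 1) F < ereal (real n)"
    using lim less_PInf_Ex_of_nat unfolding F_def by auto
  define L where "L = real n"
  have "eventually (\<lambda>t. F t < ereal L) (at_left (1::real))"
    unfolding L_def by (rule Limsup_lessD[OF L])
  then obtain b where bb: "b < 1" "\<And>y. y > b \<Longrightarrow> y < 1 \<Longrightarrow> F y < ereal L"
    by (auto simp: eventually_at_left_field)
  define b0 where "b0 = max b 0"
  have b0: "0 \<le> b0" "b0 < 1" using bb by (auto simp: b0_def)
  have dg: "continuous_on (ball 0 1) (deriv g)"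
    by (intro holomorphic_on_imp_continuous_on holomorphic_intros g) simp
  have "cball 0 b0 \<subseteq> ball (0::complex) 1" using b0 by auto
  then have "continuous_on (cball 0 b0) (deriv g)" using dg continuous_on_subset by blast
  then have "bounded (deriv g ` cball 0 b0)"
    by (intro compact_imp_bounded compact_continuous_image compact_cball)
  then have "\<exists>G. \<forall>w\<in>cball 0 b0. norm (deriv g w) \<le> G" by (simp add: bounded_iff)
  then obtain G where G: "\<And>w. w \<in> cball 0 b0 \<Longrightarrow> norm (deriv g w) \<le> G" by blast
  have G0: "0 \<le> G" using G[of 0] b0 by (smt (verit) centre_in_cball norm_ge_zero)
  have pb0: "0 < 1 - b0^2"
  proof -
    have "b0^2 < 1" using b0 by (simp add: power_less_one_iff abs_square_less_1)
    then show ?thesis by simp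
  qed
  define c0 where "c0 = G / (1 - b0^2) powr \<alpha>"
  have c0: "0 \<le> c0" using G0 pb0 by (simp add: c0_def)
  define M0 where "M0 = max L c0"
  have bnd: "(1 - t^2) powr \<beta> * Iint g \<alpha> \<theta> t \<le> M0" if th: "\<theta> \<in> {0..<2*pi}" and t: "0 \<le> t" "t < 1" for \<theta> t
  proof (cases "t > b")
    case True
    have "ereal ((1 - t^2) powr \<beta> * Iint g \<alpha> \<theta> t) \<le> F t"
      unfolding F_def by (rule SUP_upper[OF th])
    also have "\<dots> < ereal L" using bb(2)[OF True t(2)] .
    finally show ?thesis by (simp add: M0_def)
  next
    case False
    then have tb: "t \<le> b0" by (simp add: b0_def)
    have I0: "0 \<le> Iint g \<alpha> \<theta> t" by (rule Iint_nonneg[OF t g])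
    have p1: "(1 - t^2) powr \<beta> \<le> 1"
    proof (rule powr_le1[OF b])
      have "t^2 \<le> 1" using t by (simp add: power_le_one)
      then show "\<bar>1 - t^2\<bar> \<le> 1" using t by simp
    qed
    have "Iint g \<alpha> \<theta> t \<le> integral {0..t} (\<lambda>r. c0)"
      unfolding Iint_def
    proof (rule integral_le)
      show "(\<lambda>r. norm (deriv g (of_real r * cis \<theta>)) / (1 - r^2) powr \<alpha>) integrable_on {0..t}"
        by (rule integrable_continuous_interval[OF cont_I_integrand[OF g _ t(2)]]) simp
      show "(\<lambda>r. c0) integrable_on {0..t}" by (rule integrable_const_ivl)
      fix r assume r: "r \<in> {0..t}"
      have "norm (of_real r * cis \<theta>) \<le> b0" using r tb by (simp add: norm_mult)
      then have "norm (deriv g (of_real r * cis \<theta>)) \<le> G" by (intro G) simp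
      moreover have "(1 - b0^2) powr \<alpha> \<le> (1 - r^2) powr \<alpha>"
      proof (rule powr_mono2[OF a])
        show "0 \<le> 1 - b0^2" using pb0 by simp
        have "r^2 \<le> b0^2" using r tb by (intro power_mono) auto
        then show "1 - b0^2 \<le> 1 - r^2" by simp
      qed
      moreover have "0 < (1 - b0^2) powr \<alpha>" using pb0 by simp
      ultimately show "norm (deriv g (of_real r * cis \<theta>)) / (1 - r^2) powr \<alpha> \<le> c0"
        unfolding c0_def using G0 by (intro frac_le) auto
    qed
    also have "\<dots> = t * c0" using t by simp
    also have "\<dots> \<le> c0" using t c0 by (simp add: mult_left_le_one_le)
    finally have "Iint g \<alpha> \<theta> t \<le> c0" .
    moreover have "(1 - t^2) powr \<beta> * Iint g \<alpha> \<theta> t \<le> Iint g \<alpha> \<theta> t"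
      using p1 I0 by (simp add: mult_left_le_one_le)
    ultimately show ?thesis by (simp add: M0_def)
  qed
  have M0: "0 \<le> M0" using c0 by (simp add: M0_def)
  have key: "(1 - norm z ^2) powr \<beta> * norm (volterra g f z) \<le> M0 * hinf_norm \<alpha> f"
    if f: "f \<in> Hinf \<alpha>" and z: "z \<in> ball 0 1" for f z
  proof -
    obtain \<theta> where th: "\<theta> \<in> {0..<2*pi}" "z = of_real (norm z) * cis \<theta>" by (rule polar_form)
    have Nf: "0 \<le> hinf_norm \<alpha> f" by (rule hinf_nonneg[OF f])
    have "(1 - norm z ^2) powr \<beta> * norm (volterra g f z) \<le> (1 - norm z ^2) powr \<beta> * (hinf_norm \<alpha> f * Iint g \<alpha> \<theta> (norm z))"
      by (intro mult_left_mono suff_bound[OF g f z th(2)]) simp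
    also have "\<dots> = hinf_norm \<alpha> f * ((1 - norm z ^2) powr \<beta> * Iint g \<alpha> \<theta> (norm z))" by simp
    also have "\<dots> \<le> hinf_norm \<alpha> f * M0"
      using z by (intro mult_left_mono bnd th(1) Nf) auto
    finally show ?thesis by (simp add: mult.commute)
  qed
  show ?thesis
    unfolding volterra_bounded_def
  proof (intro conjI ballI exI[of _ M0] allI)
    fix f assume f: "f \<in> Hinf \<alpha>"
    have fh: "f holomorphic_on ball 0 1" using f by (simp add: Hinf_def)
    have "bounded ((\<lambda>z. (1 - (norm z)^2) powr \<beta> * norm (volterra g f z)) ` ball 0 1)"
      unfolding bounded_iff using key[OF f] by (intro exI[of _ "M0 * hinf_norm \<alpha> f"]) auto
    then show "volterra g f \<in> Hinf \<beta>" unfolding Hinf_def using volterra_holo[OF fh g] by simp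
    show "hinf_norm \<beta> (volterra g f) \<le> M0 * hinf_norm \<alpha> f"
      unfolding hinf_norm_def[of \<beta>] by (rule cSUP_least) (use key[OF f] in auto)
  qed
qed



lemma phi_lip:
  fixes h :: "complex \<Rightarrow> complex" and \<zeta> :: complex
  assumes h: "h holomorphic_on ball 0 1" and hB: "\<forall>z\<in>ball 0 1. (1 - norm z^2) * norm (deriv h z) \<le> B"
    and nz: "norm \<zeta> = 1" and ab: "0 \<le> a" "a \<le> b"
  shows "\<bar>Im (h (of_real (1 - exp (-b)) * \<zeta>)) - Im (h (of_real (1 - exp (-a)) * \<zeta>))\<bar> \<le> B * (b - a)"
proof -
  define \<gamma> where "\<gamma> = (\<lambda>x::real. (1 - exp (- (of_real x))) * \<zeta>)"
  have \<gamma>eq: "\<gamma> x = of_real (1 - exp (-x)) * \<zeta>" for x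
    by (simp add: \<gamma>_def exp_of_real[symmetric])
  have \<gamma>in: "\<gamma> x \<in> ball 0 1" if "0 \<le> x" for x
  proof -
    have "norm (\<gamma> x) = \<bar>1 - exp (-x)\<bar>" unfolding \<gamma>eq norm_mult norm_of_real nz by simp
    then show ?thesis using that by simp
  qed
  define D where "D = (\<lambda>x::real. Im (of_real (exp (-x)) * \<zeta> * deriv h (\<gamma> x)))"
  have der: "((\<lambda>x. Im (h (\<gamma> x))) has_real_derivative D x) (at x)" if x: "0 \<le> x" for x
  proof -
    have "((\<lambda>w. (1 - exp (-w)) * \<zeta>) has_field_derivative (exp (- (of_real x)) * \<zeta>)) (at (of_real x))"
      by (auto intro!: derivative_eq_intros)
    then have g1: "(\<gamma> has_vector_derivative (exp (- (of_real x)) * \<zeta>)) (at x)"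
      unfolding \<gamma>_def by (rule has_vector_derivative_real_field)
    have g2: "(h has_field_derivative deriv h (\<gamma> x)) (at (\<gamma> x))"
      using holomorphic_derivI[OF h open_ball \<gamma>in[OF x], of UNIV] by simp
    have "((h \<circ> \<gamma>) has_vector_derivative (exp (- (of_real x)) * \<zeta> * deriv h (\<gamma> x))) (at x)"
      by (rule field_vector_diff_chain_at[OF g1 g2])
    from has_field_derivative_Im[OF this] show ?thesis
      by (simp add: D_def o_def exp_of_real[symmetric])
  qed
  have Db: "\<bar>D x\<bar> \<le> B" if x: "0 \<le> x" for x
  proof -
    define r where "r = 1 - exp (-x)"
    have r: "0 \<le> r" "r < 1" using x by (auto simp: r_def)
    have "norm (\<gamma> x) = \<bar>r\<bar>" unfolding \<gamma>eq norm_mult norm_of_real nz r_def by simp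
    then have nr: "norm (\<gamma> x) = r" using r by simp
    have "\<bar>D x\<bar> \<le> norm (of_real (exp (-x)) * \<zeta> * deriv h (\<gamma> x))"
      unfolding D_def by (rule abs_Im_le_cmod)
    also have "\<dots> = (1 - r) * norm (deriv h (\<gamma> x))" using nz by (simp add: norm_mult r_def)
    also have "\<dots> \<le> (1 - r^2) * norm (deriv h (\<gamma> x))"
    proof (rule mult_right_mono)
      have "r^2 \<le> r" using r by (simp add: power2_eq_square mult_left_le)
      then show "1 - r \<le> 1 - r^2" by simp
    qed simp
    also have "\<dots> \<le> B" using hB \<gamma>in[OF x] nr by force
    finally show ?thesis .
  qed
  have up: "Im (h (\<gamma> b)) + (-B) * b \<le> Im (h (\<gamma> a)) + (-B) * a"
  proof (rule DERIV_nonpos_imp_nonincreasing[OF ab(2)])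
    fix x assume x: "a \<le> x" "x \<le> b"
    have "((\<lambda>x. Im (h (\<gamma> x)) + (-B) * x) has_real_derivative D x + (-B) * 1) (at x)"
      using ab x by (intro DERIV_add der DERIV_cmult DERIV_ident) simp
    moreover have "D x + (-B) * 1 \<le> 0" using Db[of x] ab x by simp
    ultimately show "\<exists>y. ((\<lambda>x. Im (h (\<gamma> x)) + (-B) * x) has_real_derivative y) (at x) \<and> y \<le> 0" by blast
  qed
  have lo: "Im (h (\<gamma> a)) + B * a \<le> Im (h (\<gamma> b)) + B * b"
  proof (rule DERIV_nonneg_imp_nondecreasing[OF ab(2)])
    fix x assume x: "a \<le> x" "x \<le> b"
    have "((\<lambda>x. Im (h (\<gamma> x)) + B * x) has_real_derivative D x + B * 1) (at x)"
      using ab x by (intro DERIV_add der DERIV_cmult DERIV_ident) simp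
    moreover have "0 \<le> D x + B * 1" using Db[of x] ab x by simp
    ultimately show "\<exists>y. ((\<lambda>x. Im (h (\<gamma> x)) + B * x) has_real_derivative y) (at x) \<and> 0 \<le> y" by blast
  qed
  show ?thesis using up lo unfolding \<gamma>eq by (simp add: abs_le_iff algebra_simps)
qed

locale necsetup =
  fixes g h :: "complex \<Rightarrow> complex" and \<alpha> B \<theta> t :: real
  assumes g: "g holomorphic_on ball 0 1" and h: "h holomorphic_on ball 0 1"
    and gh: "\<forall>z\<in>ball 0 1. exp (h z) = deriv g z"
    and hB: "\<forall>z\<in>ball 0 1. (1 - norm z^2) * norm (deriv h z) \<le> B"
    and B0: "0 \<le> B" and a0: "0 \<le> \<alpha>" and t0: "0 < t" and t1: "t < 1"
begin

definition "zeta = cis \<theta>"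
definition "dlt = 1 / ((B+1) * (1 + AG / c1))"
definition "SS = - ln (1 - t)"
definition "NN = nat \<lceil>SS / dlt\<rceil>"
definition "ph s = - Im (h (of_real (1 - exp (-s)) * zeta))"
definition "pht x = ph (max 0 (min x SS))"
definition "Dl n = pht (real (Suc n) * dlt) - pht (real n * dlt)"
definition "VV w = of_real (pht 0) + (\<Sum>n<NN. of_real (Dl n) * Psi dlt (w - of_real (real n * dlt)))"
definition "WW z = - Ln (1 - cnj zeta * z)"
definition "ff z = cnj zeta * exp (\<i> * VV (WW z) + of_real \<alpha> * WW z)"
definition "YY = pi / (2*dlt)"
definition "KI = YY * exp (YY^2) * exp (1/4) / (2*LG)"
definition "KK = B * dlt * KI / c1"

lemma AG_pos: "0 < AG" using LG_pos by (simp add: AG_def)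

lemma AGc1_pos: "0 < 1 + AG / c1"
proof -
  have "0 < AG / c1" using AG_pos c1_pos by (rule divide_pos_pos)
  then show ?thesis by simp
qed

lemma dlt_pos: "0 < dlt"
proof -
  have "0 < (B+1) * (1 + AG / c1)" using B0 AGc1_pos by (intro mult_pos_pos) auto
  then show ?thesis by (simp add: dlt_def)
qed

lemma Bdlt: "B * dlt * (1 + AG / c1) \<le> 1"
proof -
  have p: "0 < 1 + AG / c1" by (rule AGc1_pos)
  define P where "P = 1 + AG / c1"
  have nz: "P \<noteq> 0" "B + 1 \<noteq> 0" using p B0 unfolding P_def[symmetric] by auto
  have "B * (1 / ((B+1) * P)) * P = (B * P) / ((B+1) * P)" by simp
  also have "\<dots> = B / (B+1)" by (rule mult_divide_mult_cancel_right[OF nz(1)])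
  finally have "B * (1 / ((B+1) * P)) * P = B / (B + 1)" .
  then have "B * dlt * (1 + AG / c1) = B / (B + 1)" by (simp add: dlt_def P_def)
  also have "\<dots> \<le> 1" using B0 by simp
  finally show ?thesis .
qed

lemma nzeta: "norm zeta = 1" by (simp add: zeta_def)

lemma SS_nonneg: "0 \<le> SS"
  using t0 t1 by (simp add: SS_def ln_le_zero_iff)

lemma ph_lip: "0 \<le> a \<Longrightarrow> 0 \<le> b \<Longrightarrow> \<bar>ph a - ph b\<bar> \<le> B * \<bar>a - b\<bar>"
proof -
  assume a: "0 \<le> a" and b: "0 \<le> b"
  show ?thesis
  proof (cases "a \<le> b")
    case True
    from phi_lip[OF h hB nzeta a True] show ?thesis using True
      by (simp add: ph_def abs_minus_commute)
  next
    case False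
    from phi_lip[OF h hB nzeta b] False show ?thesis
      by (simp add: ph_def abs_minus_commute)
  qed
qed

lemma pht_lip: "\<bar>pht a - pht b\<bar> \<le> B * \<bar>a - b\<bar>"
proof -
  have "\<bar>pht a - pht b\<bar> \<le> B * \<bar>max 0 (min a SS) - max 0 (min b SS)\<bar>"
    unfolding pht_def by (rule ph_lip) auto
  also have "\<dots> \<le> B * \<bar>a - b\<bar>"
    using B0 by (intro mult_left_mono) (auto simp: abs_le_iff)
  finally show ?thesis .
qed

lemma Dl_bound: "\<bar>Dl n\<bar> \<le> B * dlt"
  using pht_lip[of "real (Suc n) * dlt" "real n * dlt"] dlt_pos
  by (simp add: Dl_def algebra_simps)

end



lemma absdiv: assumes d: "0 < (d::real)" shows "\<bar>x - y * d\<bar> / d = \<bar>x / d - y\<bar>"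
proof -
  have "(x - y*d)/d = x/d - y" using d by (simp add: field_simps)
  then have "\<bar>(x - y*d)/d\<bar> = \<bar>x/d - y\<bar>" by simp
  then show ?thesis using d by (simp add: abs_divide)
qed

context necsetup begin

lemma VV_holo[holomorphic_intros]: "q holomorphic_on S \<Longrightarrow> (\<lambda>z. VV (q z)) holomorphic_on S"
  unfolding VV_def by (intro holomorphic_intros) auto

lemma KI_nonneg: "0 \<le> KI"
  using dlt_pos LG_pos by (simp add: KI_def YY_def)

lemma Im_VV: assumes w: "\<bar>Im w\<bar> \<le> pi/2" shows "\<bar>Im (VV w)\<bar> \<le> KK"
proof -
  have YY0: "0 \<le> YY" using dlt_pos by (simp add: YY_def)
  have dY: "dlt * YY = pi/2" using dlt_pos by (simp add: YY_def)
  have "Im (VV w) = (\<Sum>n<NN. Dl n * Im (Psi dlt (w - of_real (real n * dlt))))"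
    by (simp add: VV_def Im_sum)
  then have "\<bar>Im (VV w)\<bar> \<le> (\<Sum>n<NN. \<bar>Dl n * Im (Psi dlt (w - of_real (real n * dlt)))\<bar>)"
    by (simp add: sum_abs)
  also have "\<dots> \<le> (\<Sum>n<NN. (B * dlt) * (KI * exp (- \<bar>Re w / dlt - real n\<bar>)))"
  proof (rule sum_mono)
    fix n assume "n \<in> {..<NN}"
    have "\<bar>Im (w - of_real (real n * dlt))\<bar> \<le> dlt * YY" using w dY by simp
    from Im_Psi_bound[OF dlt_pos YY0 this]
    have "\<bar>Im (Psi dlt (w - of_real (real n * dlt)))\<bar> \<le> KI * exp (-\<bar>Re w - real n * dlt\<bar>/dlt)"
      by (simp add: KI_def)
    moreover have "\<bar>Re w - real n * dlt\<bar>/dlt = \<bar>Re w / dlt - real n\<bar>"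
      by (rule absdiv[OF dlt_pos])
    ultimately have "\<bar>Im (Psi dlt (w - of_real (real n * dlt)))\<bar> \<le> KI * exp (- \<bar>Re w / dlt - real n\<bar>)"
      by (simp add: minus_divide_left)
    then show "\<bar>Dl n * Im (Psi dlt (w - of_real (real n * dlt)))\<bar> \<le> (B * dlt) * (KI * exp (- \<bar>Re w / dlt - real n\<bar>))"
      unfolding abs_mult using Dl_bound[of n] by (intro mult_mono) auto
  qed
  also have "\<dots> = (B * dlt * KI) * (\<Sum>n<NN. exp (- \<bar>Re w / dlt - real n\<bar>))"
    by (simp add: sum_distrib_left mult_ac)
  also have "\<dots> \<le> (B * dlt * KI) * (1 / c1)"
    using B0 dlt_pos KI_nonneg by (intro mult_left_mono sum_exp_bound) auto
  also have "\<dots> = KK" by (simp add: KK_def)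
  finally show ?thesis .
qed

lemma floor_part:
  assumes s: "0 \<le> s"
  shows "real n \<le> s / dlt \<longleftrightarrow> n < nat \<lfloor>s/dlt\<rfloor> + 1"
proof -
  have f0: "0 \<le> \<lfloor>s/dlt\<rfloor>" using s dlt_pos by simp
  have "n < nat \<lfloor>s/dlt\<rfloor> + 1 \<longleftrightarrow> n \<le> nat \<lfloor>s/dlt\<rfloor>" by auto
  also have "\<dots> \<longleftrightarrow> int n \<le> \<lfloor>s/dlt\<rfloor>" by (rule le_nat_iff[OF f0])
  also have "\<dots> \<longleftrightarrow> real n \<le> s / dlt" by (simp add: le_floor_iff)
  finally show ?thesis by simp
qed

lemma Re_VV: assumes s: "0 \<le> s" "s \<le> SS" shows "\<bar>Re (VV (of_real s)) - ph s\<bar> \<le> 1"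
proof -
  define H where "H n = (if 0 \<le> s - real n * dlt then 1 else (0::real))" for n
  define m where "m = min NN (nat \<lfloor>s/dlt\<rfloor> + 1)"
  have ReV: "Re (VV (of_real s)) = pht 0 + (\<Sum>n<NN. Dl n * Re (Psi dlt (of_real (s - real n * dlt))))"
    by (simp add: VV_def Re_sum)
  have a: "\<bar>(\<Sum>n<NN. Dl n * (Re (Psi dlt (of_real (s - real n * dlt))) - H n))\<bar> \<le> B * dlt * (AG / c1)"
  proof -
    have "\<bar>(\<Sum>n<NN. Dl n * (Re (Psi dlt (of_real (s - real n * dlt))) - H n))\<bar>
        \<le> (\<Sum>n<NN. \<bar>Dl n * (Re (Psi dlt (of_real (s - real n * dlt))) - H n)\<bar>)"
      by (rule sum_abs)
    also have "\<dots> \<le> (\<Sum>n<NN. (B * dlt) * (AG * exp (- \<bar>s / dlt - real n\<bar>)))"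
    proof (rule sum_mono)
      fix n assume "n \<in> {..<NN}"
      have "\<bar>Re (Psi dlt (of_real (s - real n * dlt))) - H n\<bar> \<le> AG * exp (-\<bar>s - real n * dlt\<bar>/dlt)"
        unfolding H_def by (rule Psi_step[OF dlt_pos])
      moreover have "\<bar>s - real n * dlt\<bar>/dlt = \<bar>s / dlt - real n\<bar>"
        by (rule absdiv[OF dlt_pos])
      ultimately have "\<bar>Re (Psi dlt (of_real (s - real n * dlt))) - H n\<bar> \<le> AG * exp (- \<bar>s / dlt - real n\<bar>)"
        by (simp add: minus_divide_left)
      then show "\<bar>Dl n * (Re (Psi dlt (of_real (s - real n * dlt))) - H n)\<bar> \<le> (B * dlt) * (AG * exp (- \<bar>s / dlt - real n\<bar>))"
        unfolding abs_mult using Dl_bound[of n] by (intro mult_mono) auto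
    qed
    also have "\<dots> = (B * dlt * AG) * (\<Sum>n<NN. exp (- \<bar>s / dlt - real n\<bar>))"
      by (simp add: sum_distrib_left mult_ac)
    also have "\<dots> \<le> (B * dlt * AG) * (1 / c1)"
      using B0 dlt_pos AG_pos by (intro mult_left_mono sum_exp_bound) auto
    finally show ?thesis by simp
  qed
  have setq: "{n \<in> {..<NN}. 0 \<le> s - real n * dlt} = {..<m}"
  proof -
    have eq: "0 \<le> s - real n * dlt \<longleftrightarrow> real n \<le> s / dlt" for n
      using dlt_pos by (simp add: field_simps)
    show ?thesis
      by (rule set_eqI) (simp only: mem_Collect_eq lessThan_iff eq floor_part[OF s(1)] m_def min_less_iff_conj)
  qed
  have b: "(\<Sum>n<NN. Dl n * H n) = pht (real m * dlt) - pht 0"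
  proof -
    have "(\<Sum>n<NN. Dl n * H n) = (\<Sum>n<NN. if 0 \<le> s - real n * dlt then Dl n else 0)"
      by (intro sum.cong) (auto simp: H_def)
    also have "\<dots> = sum Dl {n \<in> {..<NN}. 0 \<le> s - real n * dlt}"
      by (rule sum.inter_filter[symmetric]) simp
    also have "\<dots> = (\<Sum>n<m. Dl n)" by (simp only: setq)
    also have "\<dots> = pht (real m * dlt) - pht (real 0 * dlt)"
      unfolding Dl_def by (rule sum_lessThan_telescope)
    finally show ?thesis by simp
  qed
  have c: "\<bar>real m * dlt - s\<bar> \<le> dlt"
  proof (cases "nat \<lfloor>s/dlt\<rfloor> + 1 \<le> NN")
    case True
    then have m: "m = nat \<lfloor>s/dlt\<rfloor> + 1" by (simp add: m_def)
    have f0: "0 \<le> \<lfloor>s/dlt\<rfloor>" using s dlt_pos by simp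
    have rm: "real m = of_int \<lfloor>s/dlt\<rfloor> + 1" using f0 by (simp add: m)
    have "of_int \<lfloor>s/dlt\<rfloor> \<le> s/dlt" by simp
    moreover have "s/dlt < of_int \<lfloor>s/dlt\<rfloor> + 1" by simp
    ultimately have "s/dlt < real m" "real m \<le> s/dlt + 1" using rm by linarith+
    then have "s < real m * dlt" "real m * dlt \<le> s + dlt"
      using dlt_pos by (simp_all add: field_simps)
    then show ?thesis by simp
  next
    case False
    then have m: "m = NN" by (simp add: m_def)
    have "real NN \<le> s / dlt" using floor_part[OF s(1), of NN] False by simp
    then have le: "real NN * dlt \<le> s" using dlt_pos by (simp add: field_simps)
    have "SS / dlt \<le> real NN" unfolding NN_def by (rule real_nat_ceiling_ge)
    then have "SS \<le> real NN * dlt" using dlt_pos by (simp add: field_simps)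
    then have "real NN * dlt = s" using le s by simp
    then show ?thesis using m dlt_pos by simp
  qed
  have phs: "ph s = pht s" using s by (simp add: pht_def)
  have cc: "\<bar>pht (real m * dlt) - pht s\<bar> \<le> B * dlt"
  proof -
    have "B * \<bar>real m * dlt - s\<bar> \<le> B * dlt" by (rule mult_left_mono[OF c B0])
    then show ?thesis using pht_lip[of "real m * dlt" s] by linarith
  qed
  have sum_split: "(\<Sum>n<NN. Dl n * Re (Psi dlt (of_real (s - real n * dlt))))
      = (\<Sum>n<NN. Dl n * (Re (Psi dlt (of_real (s - real n * dlt))) - H n)) + (\<Sum>n<NN. Dl n * H n)"
    unfolding sum.distrib[symmetric] by (intro sum.cong) (simp_all add: algebra_simps)
  have "\<bar>Re (VV (of_real s)) - ph s\<bar>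
      = \<bar>(\<Sum>n<NN. Dl n * (Re (Psi dlt (of_real (s - real n * dlt))) - H n)) + (pht (real m * dlt) - pht s)\<bar>"
    unfolding ReV sum_split b phs by simp
  also have "\<dots> \<le> B * dlt * (AG / c1) + B * dlt"
    using a cc by linarith
  also have "\<dots> = B * dlt * (1 + AG / c1)" by (simp add: algebra_simps)
  also have "\<dots> \<le> 1" by (rule Bdlt)
  finally show ?thesis .
qed

end



lemma cos_ge_half: fixes x :: real assumes "\<bar>x\<bar> \<le> 1" shows "1/2 \<le> cos x"
proof -
  have "1 \<le> pi/3" using pi_gt3 by simp
  then have "cos (pi/3) \<le> cos \<bar>x\<bar>"
    using assms by (intro cos_monotone_0_pi_le) auto
  then show ?thesis by (simp add: cos_60)
qed

definition KKf :: "real \<Rightarrow> real" where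
  "KKf B = B * (1 / ((B+1) * (1 + AG / c1))) * ((pi / (2 * (1 / ((B+1) * (1 + AG / c1))))) *
      exp ((pi / (2 * (1 / ((B+1) * (1 + AG / c1)))))^2) * exp (1/4) / (2*LG)) / c1"

context necsetup begin

lemma KK_eq: "KK = KKf B"
  by (simp add: KKf_def KK_def KI_def YY_def dlt_def)

lemma zc: "cnj zeta * zeta = 1"
proof -
  have "zeta * cnj zeta = 1" using complex_norm_square[of zeta] nzeta by simp
  then show ?thesis by (simp add: mult.commute)
qed

lemma WW_facts:
  assumes z: "z \<in> ball 0 1"
  shows "0 < Re (1 - cnj zeta * z)" "\<bar>Im (WW z)\<bar> \<le> pi/2"
    "Re (WW z) = - ln (norm (1 - cnj zeta * z))" "1 - norm z \<le> norm (1 - cnj zeta * z)"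
proof -
  have nc: "norm (cnj zeta * z) = norm z" using nzeta by (simp add: norm_mult)
  have "Re (cnj zeta * z) \<le> norm (cnj zeta * z)" by (rule complex_Re_le_cmod)
  then show p: "0 < Re (1 - cnj zeta * z)" using z nc by simp
  then have "1 - cnj zeta * z \<noteq> 0" by (intro notI) simp
  have "\<bar>Im (Ln (1 - cnj zeta * z))\<bar> < pi/2" by (rule Re_Ln_pos_lt_imp[OF p])
  then show "\<bar>Im (WW z)\<bar> \<le> pi/2" by (simp add: WW_def)
  show "Re (WW z) = - ln (norm (1 - cnj zeta * z))"
    using \<open>1 - cnj zeta * z \<noteq> 0\<close> by (simp add: WW_def)
  show "1 - norm z \<le> norm (1 - cnj zeta * z)"
    using norm_triangle_ineq2[of 1 "cnj zeta * z"] nc by simp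
qed

lemma WW_holo: "(\<lambda>z. WW z) holomorphic_on ball 0 1"
  unfolding WW_def
proof (intro holomorphic_intros)
  fix z :: complex assume "z \<in> ball 0 1"
  from WW_facts(1)[OF this] show "1 - cnj zeta * z \<notin> \<real>\<^sub>\<le>\<^sub>0"
    by (auto simp: complex_nonpos_Reals_iff)
qed

lemma ff_holo: "ff holomorphic_on ball 0 1"
proof -
  have "(\<lambda>z. cnj zeta * exp (\<i> * VV (WW z) + of_real \<alpha> * WW z)) holomorphic_on ball 0 1"
    by (intro holomorphic_intros WW_holo)
  then show ?thesis by (simp add: ff_def[abs_def])
qed

lemma ff_norm:
  assumes z: "z \<in> ball 0 1"
  shows "(1 - norm z ^2) powr \<alpha> * norm (ff z) \<le> exp KK * 2 powr \<alpha>"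
proof -
  define u where "u = 1 - cnj zeta * z"
  have nu: "1 - norm z \<le> norm u" using WW_facts(4)[OF z] by (simp add: u_def)
  have nz1: "norm z < 1" using z by simp
  have nupos: "0 < norm u" using nu nz1 by linarith
  have imw: "\<bar>Im (WW z)\<bar> \<le> pi/2" by (rule WW_facts(2)[OF z])
  have rew: "Re (WW z) = - ln (norm u)" using WW_facts(3)[OF z] by (simp add: u_def)
  have "norm (ff z) = exp (- Im (VV (WW z)) + \<alpha> * Re (WW z))"
    using nzeta by (simp add: ff_def norm_mult)
  also have "\<dots> \<le> exp (KK + \<alpha> * (- ln (norm u)))"
    using Im_VV[OF imw] rew by simp
  also have "\<dots> = exp KK * exp (- \<alpha> * ln (norm u))"
    by (simp add: mult_exp_exp)
  also have "\<dots> = exp KK * (norm u) powr (- \<alpha>)"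
    using nupos by (simp add: powr_def)
  finally have fz: "norm (ff z) \<le> exp KK * (norm u) powr (- \<alpha>)" .
  have q: "(1 - norm z ^2) / norm u \<le> 2"
  proof -
    have "1 - norm z ^2 = (1 - norm z) * (1 + norm z)" by (simp add: power2_eq_square algebra_simps)
    also have "\<dots> \<le> norm u * 2"
      using nu nz1 by (intro mult_mono) auto
    finally show ?thesis using nupos by (simp add: divide_le_eq)
  qed
  have q0: "0 \<le> 1 - norm z ^2" using nz1 by (simp add: power_le_one)
  have "(1 - norm z ^2) powr \<alpha> * norm (ff z) \<le> (1 - norm z ^2) powr \<alpha> * (exp KK * (norm u) powr (- \<alpha>))"
    by (intro mult_left_mono fz) simp
  also have "\<dots> = exp KK * ((1 - norm z ^2) / norm u) powr \<alpha>"
    by (simp add: powr_divide powr_minus_divide)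
  also have "\<dots> \<le> exp KK * 2 powr \<alpha>"
    using q q0 nupos a0 by (intro mult_left_mono powr_mono2) auto
  finally show ?thesis .
qed

lemma ff_Hinf: "ff \<in> Hinf \<alpha>" "hinf_norm \<alpha> ff \<le> exp KK * 2 powr \<alpha>"
proof -
  have "bounded ((\<lambda>z. (1 - (norm z)^2) powr \<alpha> * norm (ff z)) ` ball 0 1)"
    unfolding bounded_iff using ff_norm by (intro exI[of _ "exp KK * 2 powr \<alpha>"]) auto
  then show "ff \<in> Hinf \<alpha>" unfolding Hinf_def using ff_holo by simp
  show "hinf_norm \<alpha> ff \<le> exp KK * 2 powr \<alpha>"
    unfolding hinf_norm_def by (rule cSUP_least) (use ff_norm in auto)
qed

lemma ray_Re:
  assumes r: "r \<in> {0..t}"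
  shows "exp (-KK) / 2 * (norm (deriv g (of_real r * zeta)) / (1 - r^2) powr \<alpha>)
         \<le> Re (ff (of_real r * zeta) * deriv g (of_real r * zeta) * zeta)"
proof -
  define z where "z = of_real r * zeta"
  have r0: "0 \<le> r" "r < 1" using r t1 by auto
  have zb: "z \<in> ball 0 1" unfolding z_def by (rule ray_in_ball[OF nzeta r0])
  have cz: "cnj zeta * z = of_real r" unfolding z_def using zc by (simp add: mult.commute mult.left_commute)
  define s where "s = - ln (1 - r)"
  have ww: "WW z = of_real s"
  proof -
    have "1 - cnj zeta * z = of_real (1 - r)" using cz by simp
    moreover have "Ln (of_real (1 - r)) = of_real (ln (1 - r))" by (rule Ln_of_real) (use r0 in simp)
    ultimately show ?thesis by (simp add: WW_def s_def)
  qed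
  have s0: "0 \<le> s" using r0 by (simp add: s_def)
  have sS: "s \<le> SS"
  proof -
    have "ln (1 - t) \<le> ln (1 - r)" using r t1 by simp
    then show ?thesis by (simp add: s_def SS_def)
  qed
  have er: "exp (-s) = 1 - r" using r0 by (simp add: s_def)
  have phs: "ph s = - Im (h z)" by (simp add: ph_def er z_def)
  have dg: "deriv g z = exp (h z)" using gh zb by simp
  define X where "X = \<i> * VV (of_real s) + of_real (\<alpha> * s) + h z"
  have prod: "ff z * deriv g z * zeta = exp X"
  proof -
    have "ff z * deriv g z * zeta = (cnj zeta * zeta) * (exp (\<i> * VV (of_real s) + of_real \<alpha> * of_real s) * exp (h z))"
      by (simp add: ff_def ww dg mult_ac)
    also have "\<dots> = exp X" by (simp add: zc X_def exp_add[symmetric])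
    finally show ?thesis .
  qed
  have ReX: "Re X = - Im (VV (of_real s)) + \<alpha> * s + Re (h z)" by (simp add: X_def)
  have ImX: "Im X = Re (VV (of_real s)) - ph s" by (simp add: X_def phs)
  have cosX: "1/2 \<le> cos (Im X)" unfolding ImX by (rule cos_ge_half[OF Re_VV[OF s0 sS]])
  have imv: "Im (VV (of_real s)) \<le> KK" using Im_VV[of "of_real s"] by simp
  have e1: "exp (-KK) \<le> exp (- Im (VV (of_real s)))" using imv by simp
  have e2: "1 / (1 - r^2) powr \<alpha> \<le> exp (\<alpha> * s)"
  proof -
    have p1: "0 < 1 - r" using r0 by simp
    have "1 - r \<le> 1 - r^2" using r0 by (simp add: power2_eq_square mult_left_le)
    then have "(1 - r) powr \<alpha> \<le> (1 - r^2) powr \<alpha>" using p1 a0 by (intro powr_mono2) auto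
    moreover have p2: "0 < 1 - r^2" using r0 by (simp add: power_less_one_iff abs_square_less_1)
    ultimately have "1 / (1 - r^2) powr \<alpha> \<le> 1 / (1 - r) powr \<alpha>"
      using p1 by (intro divide_left_mono mult_pos_pos) auto
    also have "\<dots> = exp (\<alpha> * s)"
      using p1 by (simp add: s_def powr_def exp_minus inverse_eq_divide)
    finally show ?thesis .
  qed
  have e3: "exp (Re (h z)) = norm (deriv g z)" by (simp add: dg)
  have "exp (-KK) / 2 * (norm (deriv g z) / (1 - r^2) powr \<alpha>)
      = (exp (-KK) * (1 / (1 - r^2) powr \<alpha>) * exp (Re (h z))) * (1/2)"
    by (simp add: e3)
  also have "\<dots> \<le> (exp (- Im (VV (of_real s))) * exp (\<alpha> * s) * exp (Re (h z))) * cos (Im X)"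
    using e1 e2 cosX by (intro mult_mono) auto
  also have "\<dots> = Re (exp X)"
  proof -
    have "exp (- Im (VV (of_real s))) * exp (\<alpha> * s) * exp (Re (h z)) = exp (Re X)"
      unfolding ReX by (simp only: mult_exp_exp)
    then show ?thesis by (simp only: Re_exp)
  qed
  finally show ?thesis using prod by (simp add: z_def)
qed

lemma main_ineq: "exp (-KK) / 2 * Iint g \<alpha> \<theta> t \<le> Re (volterra g ff (of_real t * zeta))"
proof -
  define Fz where "Fz r = ff (of_real r * zeta) * deriv g (of_real r * zeta) * zeta" for r
  define k where "k r = norm (deriv g (of_real r * zeta)) / (1 - r^2) powr \<alpha>" for r
  define c where "c = exp (-KK) / 2"
  have fc: "continuous_on (ball 0 1) ff" by (rule holomorphic_on_imp_continuous_on[OF ff_holo])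
  have dgc: "continuous_on (ball 0 1) (deriv g)"
    by (intro holomorphic_on_imp_continuous_on holomorphic_intros g) simp
  have Fzc: "continuous_on {0..t} Fz"
    unfolding Fz_def[abs_def]
    by (intro continuous_intros cont_ray[OF fc nzeta t1] cont_ray[OF dgc nzeta t1])
  have kc: "continuous_on {0..t} k" unfolding k_def[abs_def] by (rule cont_I_integrand[OF g nzeta t1])
  have "volterra g ff (of_real t * zeta)
      = integral {0..1} (\<lambda>\<tau>. ff (of_real (\<tau> * t) * zeta) * deriv g (of_real (\<tau> * t) * zeta) * (of_real t * zeta))"
    by (simp only: volterra_def cint_ray)
  also have "\<dots> = integral {0..1} (\<lambda>\<tau>. of_real t * Fz (t * \<tau>))"
    by (simp add: Fz_def mult_ac)
  finally have veq: "volterra g ff (of_real t * zeta) = integral {0..1} (\<lambda>\<tau>. of_real t * Fz (t * \<tau>))" .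
  have int1: "(\<lambda>\<tau>. of_real t * Fz (t * \<tau>)) integrable_on {0..1}"
    by (rule integrable_continuous_interval) (intro continuous_intros cont_scale[OF Fzc], use t0 in simp)
  have hRe: "((\<lambda>\<tau>. Re (of_real t * Fz (t * \<tau>))) has_integral Re (integral {0..1} (\<lambda>\<tau>. of_real t * Fz (t * \<tau>)))) {0..1}"
    by (rule has_integral_Re[OF integrable_integral[OF int1]])
  have int2: "(\<lambda>\<tau>. k (t * \<tau>) * (t * c)) integrable_on {0..1}"
    by (rule integrable_continuous_interval) (intro continuous_intros cont_scale[OF kc], use t0 in simp)
  have "integral {0..1} (\<lambda>\<tau>. k (t * \<tau>) * (t * c)) \<le> integral {0..1} (\<lambda>\<tau>. Re (of_real t * Fz (t * \<tau>)))"
  proof (rule integral_le[OF int2])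
    show "(\<lambda>\<tau>. Re (of_real t * Fz (t * \<tau>))) integrable_on {0..1}" using hRe by blast
    fix \<tau> :: real assume tau: "\<tau> \<in> {0..1}"
    have "t * \<tau> \<in> {0..t}" using tau t0 by (auto simp: mult_left_le)
    from ray_Re[OF this] have "c * k (t * \<tau>) \<le> Re (Fz (t * \<tau>))" by (simp add: c_def k_def Fz_def)
    then have "t * (c * k (t * \<tau>)) \<le> t * Re (Fz (t * \<tau>))" using t0 by simp
    then show "k (t * \<tau>) * (t * c) \<le> Re (of_real t * Fz (t * \<tau>))" by (simp add: mult_ac)
  qed
  also have "\<dots> = Re (integral {0..1} (\<lambda>\<tau>. of_real t * Fz (t * \<tau>)))"
    by (rule integral_unique[OF hRe])
  also have "\<dots> = Re (volterra g ff (of_real t * zeta))" by (simp only: veq)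
  finally have *: "integral {0..1} (\<lambda>\<tau>. k (t * \<tau>) * (t * c)) \<le> Re (volterra g ff (of_real t * zeta))" .
  have "integral {0..1} (\<lambda>\<tau>. k (t * \<tau>) * (t * c)) = c * (t * integral {0..1} (\<lambda>\<tau>. k (t * \<tau>)))"
    by (simp add: mult_ac)
  also have "\<dots> = c * Iint g \<alpha> \<theta> t"
    using Iint_stretch[OF t0 t1 g, of \<alpha> \<theta>] by (simp add: k_def zeta_def)
  finally have eq: "integral {0..1} (\<lambda>\<tau>. k (t * \<tau>) * (t * c)) = c * Iint g \<alpha> \<theta> t" .
  from * have "c * Iint g \<alpha> \<theta> t \<le> Re (volterra g ff (of_real t * zeta))" by (simp only: eq)
  then show ?thesis by (simp only: c_def)
qed

end



lemma necessity:
  assumes g: "g holomorphic_on ball 0 1" and a: "0 \<le> \<alpha>" and b: "0 \<le> \<beta>"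
    and hx: "\<exists>h. h holomorphic_on ball 0 1 \<and> (\<forall>z\<in>ball 0 1. exp (h z) = deriv g z) \<and> h \<in> Bloch"
    and vb: "volterra_bounded g \<alpha> \<beta>"
  shows "Limsup (at_left 1) (\<lambda>t::real. SUP \<theta>\<in>{0..<2*pi}. ereal ((1 - t^2) powr \<beta> * Iint g \<alpha> \<theta> t)) < \<infinity>"
proof -
  obtain h where h: "h holomorphic_on ball 0 1" and gh: "\<forall>z\<in>ball 0 1. exp (h z) = deriv g z"
    and hb: "h \<in> Bloch" using hx by blast
  have "bounded ((\<lambda>z. (1 - (norm z)^2) * norm (deriv h z)) ` ball 0 1)" using hb by (simp add: Bloch_def)
  then obtain B1 where B1: "\<forall>x\<in>(\<lambda>z. (1 - (norm z)^2) * norm (deriv h z)) ` ball 0 1. norm x \<le> B1"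
    unfolding bounded_iff by blast
  define B where "B = max B1 0"
  have hB: "\<forall>z\<in>ball 0 1. (1 - norm z^2) * norm (deriv h z) \<le> B"
  proof
    fix z :: complex assume z: "z \<in> ball 0 1"
    have "norm ((1 - (norm z)^2) * norm (deriv h z)) \<le> B1" using B1 z by blast
    moreover have "(1 - norm z^2) * norm (deriv h z) \<le> norm ((1 - (norm z)^2) * norm (deriv h z))"
      by (simp only: real_norm_def abs_ge_self)
    moreover have "B1 \<le> B" by (simp add: B_def)
    ultimately show "(1 - norm z^2) * norm (deriv h z) \<le> B" by linarith
  qed
  have B0: "0 \<le> B" by (simp add: B_def)
  obtain C where T: "\<forall>f\<in>Hinf \<alpha>. volterra g f \<in> Hinf \<beta>"
    and C: "\<forall>f\<in>Hinf \<alpha>. hinf_norm \<beta> (volterra g f) \<le> C * hinf_norm \<alpha> f"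
    using vb unfolding volterra_bounded_def by blast
  define Q where "Q = exp (KKf B) * 2 powr \<alpha>"
  define Mn where "Mn = 2 * exp (KKf B) * (max C 0 * Q)"
  have bnd: "(1 - t^2) powr \<beta> * Iint g \<alpha> \<theta> t \<le> Mn" if t: "0 < t" "t < 1" for \<theta> t
  proof -
    interpret N: necsetup g h \<alpha> B \<theta> t
      using g h gh hB B0 a t by unfold_locales auto
    have ffH: "N.ff \<in> Hinf \<alpha>" by (rule N.ff_Hinf(1))
    have ffn: "hinf_norm \<alpha> N.ff \<le> Q" using N.ff_Hinf(2) by (simp add: N.KK_eq Q_def)
    have ffn0: "0 \<le> hinf_norm \<alpha> N.ff" by (rule hinf_nonneg[OF ffH])
    have TH: "volterra g N.ff \<in> Hinf \<beta>" using T ffH by blast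
    define z where "z = of_real t * N.zeta"
    have zb: "z \<in> ball 0 1" unfolding z_def by (rule ray_in_ball[OF N.nzeta]) (use t in auto)
    have nz: "norm z = t" using t N.nzeta by (simp add: z_def norm_mult)
    have m: "exp (- N.KK) / 2 * Iint g \<alpha> \<theta> t \<le> Re (volterra g N.ff z)"
      unfolding z_def by (rule N.main_ineq)
    have I1: "Iint g \<alpha> \<theta> t \<le> 2 * exp N.KK * Re (volterra g N.ff z)"
    proof -
      have "Iint g \<alpha> \<theta> t = 2 * exp N.KK * (exp (- N.KK) / 2 * Iint g \<alpha> \<theta> t)"
        by (simp add: exp_minus)
      also have "\<dots> \<le> 2 * exp N.KK * Re (volterra g N.ff z)"
        by (rule mult_left_mono[OF m]) simp
      finally show ?thesis .
    qed
    have Re_le: "Re (volterra g N.ff z) \<le> norm (volterra g N.ff z)" by (rule complex_Re_le_cmod)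
    have pb: "0 \<le> (1 - t^2) powr \<beta>" by simp
    have "(1 - t^2) powr \<beta> * norm (volterra g N.ff z) \<le> hinf_norm \<beta> (volterra g N.ff)"
      using hinf_le[OF TH zb] nz by simp
    also have "\<dots> \<le> C * hinf_norm \<alpha> N.ff" using C ffH by blast
    also have "\<dots> \<le> max C 0 * hinf_norm \<alpha> N.ff" by (rule mult_right_mono[OF _ ffn0]) simp
    also have "\<dots> \<le> max C 0 * Q" by (rule mult_left_mono[OF ffn]) simp
    finally have V: "(1 - t^2) powr \<beta> * norm (volterra g N.ff z) \<le> max C 0 * Q" .
    have "(1 - t^2) powr \<beta> * Iint g \<alpha> \<theta> t \<le> (1 - t^2) powr \<beta> * (2 * exp N.KK * Re (volterra g N.ff z))"
      by (rule mult_left_mono[OF I1 pb])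
    also have "\<dots> \<le> (1 - t^2) powr \<beta> * (2 * exp N.KK * norm (volterra g N.ff z))"
      using Re_le pb by (intro mult_left_mono) auto
    also have "\<dots> = 2 * exp N.KK * ((1 - t^2) powr \<beta> * norm (volterra g N.ff z))" by (simp add: mult_ac)
    also have "\<dots> \<le> 2 * exp N.KK * (max C 0 * Q)" using V by (intro mult_left_mono) auto
    finally show ?thesis by (simp add: Mn_def N.KK_eq)
  qed
  have ev: "eventually (\<lambda>t. (SUP \<theta>\<in>{0..<2*pi}. ereal ((1 - t^2) powr \<beta> * Iint g \<alpha> \<theta> t)) \<le> ereal Mn) (at_left (1::real))"
    unfolding eventually_at_left_field
    by (rule exI[of _ 0]) (auto intro!: SUP_least bnd)
  have "Limsup (at_left 1) (\<lambda>t::real. SUP \<theta>\<in>{0..<2*pi}. ereal ((1 - t^2) powr \<beta> * Iint g \<alpha> \<theta> t)) \<le> ereal Mn"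
    by (rule Limsup_bounded[OF ev])
  then show ?thesis by (rule le_less_trans) simp
qed

theorem theorem1:
  fixes \<alpha> \<beta> :: real and g :: "complex \<Rightarrow> complex"
  assumes "\<alpha> \<ge> 0" and "\<beta> \<ge> 0"
    and "g holomorphic_on ball 0 1"
    and "\<forall>z\<in>ball 0 1. deriv g z \<noteq> 0"
    and "\<exists>h. h holomorphic_on ball 0 1 \<and> (\<forall>z\<in>ball 0 1. exp (h z) = deriv g z) \<and> h \<in> Bloch"
  shows "volterra_bounded g \<alpha> \<beta> \<longleftrightarrow>
    Limsup (at_left 1)
      (\<lambda>t::real. SUP \<theta>\<in>{0..<2*pi}. ereal ((1 - t^2) powr \<beta> *
          integral {0..t} (\<lambda>r. norm (deriv g (of_real r * cis \<theta>)) / (1 - r^2) powr \<alpha>)))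
    < \<infinity>"
proof -
  have eqF: "(\<lambda>t::real. SUP \<theta>\<in>{0..<2*pi}. ereal ((1 - t^2) powr \<beta> *
          integral {0..t} (\<lambda>r. norm (deriv g (of_real r * cis \<theta>)) / (1 - r^2) powr \<alpha>)))
      = (\<lambda>t. SUP \<theta>\<in>{0..<2*pi}. ereal ((1 - t^2) powr \<beta> * Iint g \<alpha> \<theta> t))"
    by (simp add: Iint_def)
  show ?thesis unfolding eqF
    using sufficiency[OF assms(3,1,2)] necessity[OF assms(3,1,2,5)] by blast
qed

end
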